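(* Let $S$ be as in the context, $1\le k<n$, and let $\phi\in\mathcal{T}_k(S)$ with $y=l(\phi)$. Then the following are equivalent: (i) $\phi$ has a unique Weiner link $(\phi,\varphi,c)$ and $\varphi$ has no siblings in $\mathcal{T}(S)$; (ii) $y$ has exactly one predecessor $x$ in $G_k(S)$, and $y$ is the only successor of $x$ in $G_k(S)$. Moreover, in this case $x=l(\psi)$ where $\psi$ is the parent of $\varphi$ in $\mathcal{T}(S)$.
   Context: $\Sigma$ is a finite totally ordered alphabet containing a symbol $\$$ smaller than every other symbol. $S$ is a string of length $n\ge 2$ over $\Sigma$ whose last character is $\$$ and in which $\$$ occurs nowhere else; strings are indexed from $1$ and $S[i..j]$ denotes a substring. The rotations of $S$ are the $n$ strings $S[i..n]S[1..i-1]$, $i\in[1,n]$. The rotation-trie $\mathcal{T}(S)$ is the trie of the set of rotations of $S$: a rooted tree whose edges are labeled by single characters, the children of a node having distinct edge labels and being ordered from left to right by increasing edge label. The label $l(\phi)$ of a node $\phi$ is the concatenation of edge labels on the root-to-$\phi$ path, and its level is $|l(\phi)|$; leaves are the $n$ nodes at level $n$. $\mathcal{T}_k(S)$ denotes the set of nodes at level $k$. Siblings are distinct nodes with the same parent. A triple $(\phi,\varphi,c)$ with $\phi,\varphi$ nodes of $\mathcal{T}(S)$ and $c\in\Sigma$ is a Weiner link of $\phi$ if $l(\varphi)=c\,l(\phi)$, or $|l(\phi)|=n$ and $l(\varphi)=c\,l(\phi)[1..n-1]$. A Weiner link $(\phi,\varphi,c)$ is unique if there is no Weiner link $(\phi,\psi,d)$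 with $\psi\ne\varphi$. For $1\le k\le n$ let $Z_k(S)=S[1..n]S[1..k]$. The order-$k$ de Bruijn graph $G_k(S)$ is the directed multigraph whose node set is $\{Z_k(S)[i..i+k-1]: i\in[1,n]\}$ and which, for every string $z\in\Sigma^{k+1}$ occurring exactly $m\ge1$ times as a substring of $Z_k(S)$, contains the edge $(z[1..k],z[2..k+1])$ with multiplicity $m$. A node $x$ is a predecessor of $y$ (and $y$ a successor of $x$) if $G_k(S)$ contains an edge $(x,y)$ of positive multiplicity. *)

theory Defs
  imports Main
begin

text \<open>Strings are lists, indexed from 0 internally (the paper indexes from 1).
  Nodes of the rotation trie are identified with their labels: a node is a
  prefix of some rotation; the root is the empty string; the parent of a
  non-root node w is butlast w.\<close>

definition rotations :: "'a list \<Rightarrow> 'a list set" where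
  "rotations S = {rotate i S | i. i < length S}"

definition trie_node :: "'a list \<Rightarrow> 'a list \<Rightarrow> bool" where
  "trie_node S w \<longleftrightarrow> (\<exists>r \<in> rotations S. w = take (length w) r)"

definition trie_level :: "'a list \<Rightarrow> nat \<Rightarrow> 'a list set" where
  "trie_level S k = {w. trie_node S w \<and> length w = k}"

definition weiner_link :: "'a list \<Rightarrow> 'a list \<Rightarrow> 'a list \<Rightarrow> 'a \<Rightarrow> bool" where
  "weiner_link S phi vphi c \<longleftrightarrow> trie_node S phi \<and> trie_node S vphi \<and>
     (vphi = c # phi \<or> (length phi = length S \<and> vphi = c # take (length S - 1) phi))"

definition unique_weiner_link :: "'a list \<Rightarrow> 'a list \<Rightarrow> 'a list \<Rightarrow> 'a \<Rightarrow> bool" where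
  "unique_weiner_link S phi vphi c \<longleftrightarrow> weiner_link S phi vphi c \<and>
     (\<forall>psi d. weiner_link S phi psi d \<longrightarrow> psi = vphi)"

definition siblings :: "'a list \<Rightarrow> 'a list \<Rightarrow> 'a list \<Rightarrow> bool" where
  "siblings S u v \<longleftrightarrow> trie_node S u \<and> trie_node S v \<and> u \<noteq> v \<and>
     u \<noteq> [] \<and> v \<noteq> [] \<and> butlast u = butlast v"

definition has_no_siblings :: "'a list \<Rightarrow> 'a list \<Rightarrow> bool" where
  "has_no_siblings S v \<longleftrightarrow> \<not> (\<exists>u. siblings S v u)"

definition Zk :: "'a list \<Rightarrow> nat \<Rightarrow> 'a list" where
  "Zk S k = S @ take k S"

definition substr :: "'a list \<Rightarrow> nat \<Rightarrow> nat \<Rightarrow> 'a list" where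
  "substr Z i m = take m (drop i Z)"

definition dbg_nodes :: "'a list \<Rightarrow> nat \<Rightarrow> 'a list set" where
  "dbg_nodes S k = {substr (Zk S k) i k | i. i < length S}"

definition dbg_mult :: "'a list \<Rightarrow> nat \<Rightarrow> 'a list \<Rightarrow> 'a list \<Rightarrow> nat" where
  "dbg_mult S k x y = card {i. i + k + 1 \<le> length (Zk S k) \<and>
      (let z = substr (Zk S k) i (k + 1) in take k z = x \<and> drop 1 z = y)}"

definition dbg_pred :: "'a list \<Rightarrow> nat \<Rightarrow> 'a list \<Rightarrow> 'a list \<Rightarrow> bool" where
  "dbg_pred S k x y \<longleftrightarrow> 0 < dbg_mult S k x y"

definition valid_string :: "'a::linorder \<Rightarrow> 'a list \<Rightarrow> bool" where
  "valid_string dl S \<longleftrightarrow> (\<forall>c. c \<noteq> dl \<longrightarrow> dl < c) \<and> length S \<ge> 2 \<and>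
     last S = dl \<and> dl \<notin> set (butlast S)"

end

theory Submission
  imports Defs
begin

lemma rotations_iff:
  assumes "S \<noteq> []"
  shows "r \<in> rotations S \<longleftrightarrow> (\<exists>i. r = rotate i S)"
proof
  assume "r \<in> rotations S" thus "\<exists>i. r = rotate i S" unfolding rotations_def by blast
next
  assume "\<exists>i. r = rotate i S"
  then obtain i where i: "r = rotate i S" by blast
  have "r = rotate (i mod length S) S" using i by (metis rotate_conv_mod)
  moreover have "i mod length S < length S" using assms by simp
  ultimately show "r \<in> rotations S" unfolding rotations_def by blast
qed

lemma substr_rot:
  assumes "k < length S" "i < length S"
  shows "substr (Zk S k) i (k+1) = take (k+1) (rotate i S)"
proof -
  have r: "rotate i S = drop i S @ take i S"
    using assms by (simp add: rotate_drop_take)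
  have d: "drop i (S @ take k S) = drop i S @ take k S" using assms by simp
  have a1: "Suc (k+i) - length S \<le> i" "Suc (k+i) - length S \<le> k" using assms by arith+
  show ?thesis unfolding substr_def Zk_def r d
    using assms a1 by (simp add: min_def)
qed

lemma dbg_pred_iff:
  assumes "k < length S"
  shows "dbg_pred S k x y \<longleftrightarrow>
    (\<exists>z. trie_node S z \<and> length z = k+1 \<and> take k z = x \<and> drop 1 z = y)"
proof -
  let ?A = "{i. i + k + 1 \<le> length (Zk S k) \<and>
      (let z = substr (Zk S k) i (k + 1) in take k z = x \<and> drop 1 z = y)}"
  have lenZ: "length (Zk S k) = length S + k" using assms by (simp add: Zk_def)
  have A: "?A = {i. i < length S \<and> take k (take (k+1) (rotate i S)) = x
            \<and> drop 1 (take (k+1) (rotate i S)) = y}"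
  proof (rule Collect_cong)
    fix i show "(i + k + 1 \<le> length (Zk S k) \<and>
      (let z = substr (Zk S k) i (k + 1) in take k z = x \<and> drop 1 z = y)) \<longleftrightarrow>
      (i < length S \<and> take k (take (k+1) (rotate i S)) = x
            \<and> drop 1 (take (k+1) (rotate i S)) = y)"
    proof (cases "i < length S")
      case True
      show ?thesis unfolding Let_def substr_rot[OF assms True] using True lenZ by simp
    next
      case False
      then show ?thesis using lenZ by simp
    qed
  qed
  have fin: "finite ?A" unfolding A by auto
  have "dbg_pred S k x y \<longleftrightarrow> ?A \<noteq> {}"
    unfolding dbg_pred_def dbg_mult_def using fin card_gt_0_iff by blast
  also have "\<dots> \<longleftrightarrow> (\<exists>z. trie_node S z \<and> length z = k+1 \<and> take k z = x \<and> drop 1 z = y)"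
  proof
    assume "?A \<noteq> {}"
    then obtain i where i: "i < length S" "take k (take (k+1) (rotate i S)) = x"
       "drop 1 (take (k+1) (rotate i S)) = y" unfolding A by auto
    have "trie_node S (take (k+1) (rotate i S))"
      unfolding trie_node_def rotations_def using i(1) assms
      by (rule_tac x="rotate i S" in bexI) auto
    moreover have "length (take (k+1) (rotate i S)) = k+1" using assms by simp
    ultimately show "\<exists>z. trie_node S z \<and> length z = k+1 \<and> take k z = x \<and> drop 1 z = y"
      using i by blast
  next
    assume "\<exists>z. trie_node S z \<and> length z = k+1 \<and> take k z = x \<and> drop 1 z = y"
    then obtain z where z: "trie_node S z" "length z = k+1" "take k z = x" "drop 1 z = y"
      by blast
    then obtain i where "i < length S" "z = take (k+1) (rotate i S)"
      unfolding trie_node_def rotations_def by auto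
    then show "?A \<noteq> {}" unfolding A using z by auto
  qed
  finally show ?thesis .
qed

lemma pred_phi_iff:
  assumes "k < length S" "length phi = k" "1 \<le> k"
  shows "dbg_pred S k x phi \<longleftrightarrow> (\<exists>c. trie_node S (c#phi) \<and> x = c # butlast phi)"
proof -
  have bl: "butlast phi = take (k-1) phi" using assms by (simp add: butlast_conv_take)
  show ?thesis
    unfolding dbg_pred_iff[OF assms(1)]
  proof
    assume "\<exists>z. trie_node S z \<and> length z = k + 1 \<and> take k z = x \<and> drop 1 z = phi"
    then obtain z where z: "trie_node S z" "length z = k + 1" "take k z = x" "drop 1 z = phi"
      by blast
    then obtain c t where zc: "z = c # t" by (cases z) auto
    have "t = phi" using z(4) zc by simp
    moreover have "take k z = c # take (k-1) t" using zc assms(3)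
      by (cases k) auto
    ultimately show "\<exists>c. trie_node S (c#phi) \<and> x = c # butlast phi"
      using z zc bl by auto
  next
    assume "\<exists>c. trie_node S (c#phi) \<and> x = c # butlast phi"
    then obtain c where c: "trie_node S (c#phi)" "x = c # butlast phi" by blast
    have "take k (c#phi) = c # take (k-1) phi" using assms(3) by (cases k) auto
    then show "\<exists>z. trie_node S z \<and> length z = k + 1 \<and> take k z = x \<and> drop 1 z = phi"
      using c bl assms by (rule_tac x="c#phi" in exI) auto
  qed
qed

lemma exists_ext:
  assumes "k < length S" "trie_node S phi" "length phi = k"
  shows "\<exists>c. trie_node S (c#phi)"
proof -
  have ne: "S \<noteq> []" using assms by auto
  obtain i where phi: "phi = take k (rotate i S)"
    using assms unfolding trie_node_def rotations_def by auto
  define j where "j = i + length S - 1"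
  let ?r = "rotate j S"
  have "rotate1 ?r = rotate (Suc j) S" by (simp add: rotate_def)
  also have "Suc j = i + length S" using ne unfolding j_def by (cases S) auto
  also have "rotate (i + length S) S = rotate i S"
  proof -
    have "rotate i (rotate (length S) S) = rotate (i + length S) S" by (rule rotate_rotate)
    thus ?thesis by simp
  qed
  finally have rr: "rotate1 ?r = rotate i S" .
  have lr: "length ?r = length S" by simp
  then obtain h t where ht: "?r = h # t" using ne by (cases ?r) auto
  have "rotate i S = t @ [h]" using rr ht by simp
  moreover have "length t = length S - 1" using lr ht by simp
  ultimately have "phi = take k t" using phi assms(1) by simp
  hence "h # phi = take (k+1) ?r" using ht by simp
  moreover have "?r \<in> rotations S" using rotations_iff[OF ne] by blast
  ultimately have "trie_node S (h#phi)" unfolding trie_node_def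
    using assms(1,3) by (intro bexI[of _ ?r]) auto
  thus ?thesis by blast
qed

lemma wl_iff:
  assumes "k < length S" "length phi = k"
  shows "weiner_link S phi v c \<longleftrightarrow> trie_node S phi \<and> trie_node S (c#phi) \<and> v = c#phi"
  using assms unfolding weiner_link_def by auto

theorem mainTheorem2:
  fixes S :: "'a::{linorder,finite} list" and dl :: 'a and k :: nat and phi :: "'a list"
  assumes "valid_string dl S"
    and "1 \<le> k" and "k < length S"
    and "phi \<in> trie_level S k"
  shows "((\<exists>vphi c. unique_weiner_link S phi vphi c \<and> has_no_siblings S vphi) \<longleftrightarrow>
         (\<exists>x. dbg_pred S k x phi \<and> (\<forall>x'. dbg_pred S k x' phi \<longrightarrow> x' = x) \<and>
              (\<forall>y'. dbg_pred S k x y' \<longrightarrow> y' = phi))) \<and>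
         (\<forall>vphi c x. unique_weiner_link S phi vphi c \<and> has_no_siblings S vphi \<and>
         dbg_pred S k x phi \<and> (\<forall>x'. dbg_pred S k x' phi \<longrightarrow> x' = x) \<and>
         (\<forall>y'. dbg_pred S k x y' \<longrightarrow> y' = phi) \<longrightarrow> x = butlast vphi)"
proof -
  have tp: "trie_node S phi" and lp: "length phi = k"
    using assms(4) unfolding trie_level_def by auto
  have phine: "phi \<noteq> []" using lp assms(2) by auto
  note PI = pred_phi_iff[OF assms(3) lp assms(2)]
  note WL = wl_iff[OF assms(3) lp]
  note DI = dbg_pred_iff[OF assms(3)]
  have A: "(\<exists>vphi c. unique_weiner_link S phi vphi c \<and> has_no_siblings S vphi) \<longleftrightarrow>
         (\<exists>x. dbg_pred S k x phi \<and> (\<forall>x'. dbg_pred S k x' phi \<longrightarrow> x' = x) \<and>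
              (\<forall>y'. dbg_pred S k x y' \<longrightarrow> y' = phi))"
  proof
    assume "\<exists>vphi c. unique_weiner_link S phi vphi c \<and> has_no_siblings S vphi"
    then obtain v c where u: "unique_weiner_link S phi v c" and ns: "has_no_siblings S v"
      by blast
    have v: "v = c#phi" "trie_node S (c#phi)" using u WL unfolding unique_weiner_link_def by auto
    have uq: "\<And>d. trie_node S (d#phi) \<Longrightarrow> d = c"
      using u tp WL v unfolding unique_weiner_link_def by blast
    let ?x = "c # butlast phi"
    have "dbg_pred S k ?x phi" using PI v by blast
    moreover have "\<forall>x'. dbg_pred S k x' phi \<longrightarrow> x' = ?x" using PI uq by blast
    moreover have "\<forall>y'. dbg_pred S k ?x y' \<longrightarrow> y' = phi"
    proof (intro allI impI)
      fix y' assume "dbg_pred S k ?x y'"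
      then obtain z where z: "trie_node S z" "length z = k+1" "take k z = ?x" "drop 1 z = y'"
        using DI by blast
      have bz: "butlast z = ?x" using z by (simp add: butlast_conv_take)
      have "butlast (c#phi) = ?x" using phine by simp
      have zne: "z \<noteq> []" using z(2) by auto
      have "\<not> siblings S (c#phi) z" using ns v unfolding has_no_siblings_def by blast
      hence "z = c#phi" using v z zne bz \<open>butlast (c#phi) = ?x\<close> unfolding siblings_def by auto
      thus "y' = phi" using z by simp
    qed
    ultimately show "\<exists>x. dbg_pred S k x phi \<and> (\<forall>x'. dbg_pred S k x' phi \<longrightarrow> x' = x) \<and>
              (\<forall>y'. dbg_pred S k x y' \<longrightarrow> y' = phi)" by blast
  next
    assume "\<exists>x. dbg_pred S k x phi \<and> (\<forall>x'. dbg_pred S k x' phi \<longrightarrow> x' = x) \<and>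
              (\<forall>y'. dbg_pred S k x y' \<longrightarrow> y' = phi)"
    then obtain x where px: "dbg_pred S k x phi" and ux: "\<forall>x'. dbg_pred S k x' phi \<longrightarrow> x' = x"
      and sx: "\<forall>y'. dbg_pred S k x y' \<longrightarrow> y' = phi" by blast
    obtain c where c: "trie_node S (c#phi)" "x = c # butlast phi" using px PI by blast
    have "unique_weiner_link S phi (c#phi) c"
      unfolding unique_weiner_link_def
    proof (intro conjI allI impI)
      show "weiner_link S phi (c#phi) c" using WL tp c by simp
      fix psi d assume "weiner_link S phi psi d"
      hence "psi = d#phi" "trie_node S (d#phi)" using WL by auto
      hence "dbg_pred S k (d # butlast phi) phi" using PI by blast
      hence "d = c" using ux c by auto
      thus "psi = c#phi" using \<open>psi = d#phi\<close> by simp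
    qed
    moreover have "has_no_siblings S (c#phi)"
      unfolding has_no_siblings_def
    proof
      assume "\<exists>u. siblings S (c#phi) u"
      then obtain u where su: "siblings S (c#phi) u" by blast
      hence tu: "trie_node S u" "u \<noteq> c#phi" "u \<noteq> []" "butlast u = c # butlast phi"
        unfolding siblings_def using phine by auto
      have lu: "length u = k+1" using tu(3,4) lp phine
        by (metis length_butlast length_Cons Suc_eq_plus1 Suc_pred' length_greater_0_conv)
      have "take k u = butlast u" using lu by (simp add: butlast_conv_take)
      hence "dbg_pred S k x (drop 1 u)" using DI tu lu c by auto
      hence "drop 1 u = phi" using sx by blast
      moreover obtain a t where ut: "u = a # t" using tu(3) by (cases u) auto
      ultimately have "u = c#phi" using tu(4) by (auto split: if_splits)
      thus False using tu by simp
    qed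
    ultimately show "\<exists>vphi c. unique_weiner_link S phi vphi c \<and> has_no_siblings S vphi" by blast
  qed
  have B: "\<forall>vphi c x. unique_weiner_link S phi vphi c \<and> has_no_siblings S vphi \<and>
         dbg_pred S k x phi \<and> (\<forall>x'. dbg_pred S k x' phi \<longrightarrow> x' = x) \<and>
         (\<forall>y'. dbg_pred S k x y' \<longrightarrow> y' = phi) \<longrightarrow> x = butlast vphi"
  proof (intro allI impI)
    fix v c x assume h: "unique_weiner_link S phi v c \<and> has_no_siblings S v \<and>
         dbg_pred S k x phi \<and> (\<forall>x'. dbg_pred S k x' phi \<longrightarrow> x' = x) \<and>
         (\<forall>y'. dbg_pred S k x y' \<longrightarrow> y' = phi)"
    have v: "v = c#phi" "trie_node S (c#phi)" using h WL unfolding unique_weiner_link_def by auto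
    hence "dbg_pred S k (c # butlast phi) phi" using PI by blast
    hence "x = c # butlast phi" using h by blast
    thus "x = butlast v" using v phine by simp
  qed
  show ?thesis by (rule conjI[OF A B])
qed

end
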